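(* Let $E\subseteq\mathbb{R}^d$ be a compact convex set and let $\alpha:[0,L]\to\mathbb{R}^d$ be a rectifiable curve with length $\ell(\alpha)$. Let $F\subseteq[0,L]$ be a finite set and $E_F=\bigcup_{t\in F}(E+\alpha(t))$. Then $|E_F|\le|E|+\ell(\alpha)\,\Delta_E$.
   Context: $|\cdot|$ denotes Lebesgue measure. $\Delta_E=\sup_{q\in\mathbb{R}^d\setminus\{0\}}|\mathcal{P}_{q^\perp}E|$, where $\mathcal{P}_{q^\perp}$ is the orthogonal projection onto the hyperplane $q^\perp=\{x:\langle x,q\rangle=0\}$ and the measure of the projection is $(d-1)$-dimensional. *)

theory Defs
  imports "HOL-Analysis.Analysis"
begin

definition hyperplane_proj :: "'a::euclidean_space \<Rightarrow> 'a \<Rightarrow> 'a" where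
  "hyperplane_proj q x = x - ((x \<bullet> q) / (q \<bullet> q)) *\<^sub>R q"

text \<open>(d-1)-dimensional Lebesgue measure of a set S contained in the hyperplane
  orthogonal to q: by Fubini it equals the d-dimensional Lebesgue measure of the
  right prism of height 1 over S in the unit normal direction.\<close>
definition hyperplane_measure :: "'a::euclidean_space \<Rightarrow> 'a set \<Rightarrow> real" where
  "hyperplane_measure q S =
     measure lebesgue {x + s *\<^sub>R (q /\<^sub>R norm q) | x s. x \<in> S \<and> s \<in> {0..1}}"

definition Delta :: "'a::euclidean_space set \<Rightarrow> real" where
  "Delta E = (SUP q\<in>UNIV - {0}. hyperplane_measure q (hyperplane_proj q ` E))"

definition polygon_lengths :: "(real \<Rightarrow> 'a::euclidean_space) \<Rightarrow> real \<Rightarrow> real \<Rightarrow> real set" where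
  "polygon_lengths \<alpha> a b =
     {(\<Sum>i<n. dist (\<alpha> (t (Suc i))) (\<alpha> (t i))) | n t.
        t 0 = a \<and> t n = b \<and> (\<forall>i<n. t i \<le> t (Suc i))}"

definition rectifiable_curve :: "(real \<Rightarrow> 'a::euclidean_space) \<Rightarrow> real \<Rightarrow> real \<Rightarrow> bool" where
  "rectifiable_curve \<alpha> a b \<longleftrightarrow> continuous_on {a..b} \<alpha> \<and> bdd_above (polygon_lengths \<alpha> a b)"

definition curve_length :: "(real \<Rightarrow> 'a::euclidean_space) \<Rightarrow> real \<Rightarrow> real \<Rightarrow> real" where
  "curve_length \<alpha> a b = Sup (polygon_lengths \<alpha> a b)"

end

theory Submission
  imports Defs
begin

lemma mem_transl: "y \<in> (\<lambda>x. x + w) ` A \<longleftrightarrow> y - w \<in> A"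
  for w :: "'a::ab_group_add"
  by (auto simp: image_iff intro!: bexI[of _ "y - w"])

lemma measure_transl: "measure lebesgue ((\<lambda>x. x + a) ` S) = measure lebesgue S"
  for a :: "'a::euclidean_space"
proof -
  have "(\<lambda>x. x + a) ` S = (+) a ` S" by (simp add: add.commute)
  then show ?thesis by (simp add: measure_translation)
qed

lemma lmeas_transl: "S \<in> lmeasurable \<Longrightarrow> (\<lambda>x. x + a) ` S \<in> lmeasurable"
  for a :: "'a::euclidean_space"
proof -
  assume "S \<in> lmeasurable"
  moreover have "(\<lambda>x. x + a) ` S = (+) a ` S" by (simp add: add.commute)
  ultimately show ?thesis by (simp add: measurable_translation)
qed

lemma compact_transl: "compact S \<Longrightarrow> compact ((\<lambda>x. x + a) ` S)"
  for a :: "'a::euclidean_space"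
  by (intro compact_continuous_image continuous_intros)

lemma continuous_hproj: "continuous_on S (hyperplane_proj q)"
proof -
  have "hyperplane_proj q = (\<lambda>x. x - ((x \<bullet> q) * inverse (q \<bullet> q)) *\<^sub>R q)"
    by (simp add: hyperplane_proj_def divide_inverse fun_eq_iff)
  then show ?thesis by (simp add: continuous_intros)
qed

lemma compact_prism:
  fixes w :: "'a::euclidean_space"
  assumes "compact S"
  shows "compact {x + s *\<^sub>R w | x s. x \<in> S \<and> s \<in> {0..1::real}}"
proof -
  have "{x + s *\<^sub>R w | x s. x \<in> S \<and> s \<in> {0..1::real}} = (\<lambda>(x,s). x + s *\<^sub>R w) ` (S \<times> {0..1})"
    by force
  moreover have "compact ((\<lambda>(x,s). x + s *\<^sub>R w) ` (S \<times> {0..1::real}))"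
    by (intro compact_continuous_image compact_Times assms compact_Icc)
       (auto intro!: continuous_intros simp: case_prod_unfold)
  ultimately show ?thesis by simp
qed

lemma norm_hproj: "norm (hyperplane_proj q x) \<le> norm x"
proof (cases "q = 0")
  case True then show ?thesis by (simp add: hyperplane_proj_def)
next
  case False
  define c where "c = (x \<bullet> q) / (q \<bullet> q)"
  have qq: "q \<bullet> q > 0" using False by simp
  have orth: "(x - c *\<^sub>R q) \<bullet> (c *\<^sub>R q) = 0"
    using qq by (simp add: c_def algebra_simps inner_commute power2_eq_square)
  have "norm x ^ 2 = norm ((x - c *\<^sub>R q) + c *\<^sub>R q) ^ 2" by simp
  also have "\<dots> = norm (x - c *\<^sub>R q) ^ 2 + norm (c *\<^sub>R q) ^ 2"
    using orth by (simp only: norm_add_Pythagorean orthogonal_def)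
  finally have "norm (x - c *\<^sub>R q) ^ 2 \<le> norm x ^ 2" by simp
  then show ?thesis by (simp add: hyperplane_proj_def c_def power2_le_iff_abs_le)
qed

lemma key:
  fixes E :: "'a::euclidean_space set" and v :: 'a
  assumes cE: "compact E" and cvE: "convex E" and v: "v \<noteq> 0"
  shows "measure lebesgue ((\<lambda>x. x + v) ` E - E) \<le> norm v * hyperplane_measure v (hyperplane_proj v ` E)"
proof -
  define u where "u = v /\<^sub>R norm v"
  define Q where "Q = {x + s *\<^sub>R u | x s. x \<in> hyperplane_proj v ` E \<and> s \<in> {0..1::real}}"
  define D where "D = (\<lambda>x. x + v) ` E - E"
  have nu: "norm u = 1" using v by (simp add: u_def)
  have vu: "v = norm v *\<^sub>R u" using v by (simp add: u_def)
  have hm: "hyperplane_measure v (hyperplane_proj v ` E) = measure lebesgue Q"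
    by (simp add: hyperplane_measure_def Q_def u_def)
  have cQ: "compact Q" unfolding Q_def
    by (intro compact_prism compact_continuous_image continuous_hproj cE)
  have mQ0: "measure lebesgue Q \<ge> 0" by simp
  obtain R where R: "R \<ge> 0" "\<And>x. x \<in> E \<Longrightarrow> norm x \<le> R"
    using compact_imp_bounded[OF cE] unfolding bounded_pos by (meson less_imp_le)
  have Elm: "E \<in> sets lebesgue" using lmeasurable_compact[OF cE] by (simp add: fmeasurableD)
  have Dlm: "D \<in> lmeasurable" unfolding D_def
    by (intro fmeasurable_Diff lmeasurable_compact compact_transl cE Elm)
  define Dj where "Dj j = (\<lambda>x. x + real j *\<^sub>R v) ` D" for j :: nat
  have memDj: "y \<in> Dj j \<longleftrightarrow> y - real (Suc j) *\<^sub>R v \<in> E \<and> y - real j *\<^sub>R v \<notin> E" for y j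
  proof -
    have eq: "y - real (Suc j) *\<^sub>R v = y - real j *\<^sub>R v - v" by (simp add: algebra_simps)
    have "y \<in> Dj j \<longleftrightarrow> y - real j *\<^sub>R v - v \<in> E \<and> y - real j *\<^sub>R v \<notin> E"
      unfolding Dj_def D_def mem_transl Diff_iff by (rule refl)
    then show ?thesis by (simp only: eq)
  qed
  have aux: False if jk: "j < k" and y: "y \<in> Dj j" "y \<in> Dj k" for j k y
  proof -
    define a where "a = y - real (Suc k) *\<^sub>R v"
    define b where "b = y - real (Suc j) *\<^sub>R v"
    define \<mu> where "\<mu> = 1 / (real k - real j)"
    have a: "a \<in> E" and b: "b \<in> E" and nk: "y - real k *\<^sub>R v \<notin> E"
      using y memDj a_def b_def by auto
    have kj: "real k - real j > 0" using jk by simp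
    have ba: "b - a = (real k - real j) *\<^sub>R v" by (simp add: a_def b_def algebra_simps)
    have "(1 - \<mu>) *\<^sub>R a + \<mu> *\<^sub>R b = a + \<mu> *\<^sub>R (b - a)" by (simp add: algebra_simps)
    also have "\<dots> = a + v" using kj by (simp add: ba \<mu>_def)
    also have "\<dots> = y - real k *\<^sub>R v" by (simp add: a_def algebra_simps)
    finally have eq: "(1 - \<mu>) *\<^sub>R a + \<mu> *\<^sub>R b = y - real k *\<^sub>R v" .
    have "\<mu> \<le> 1" "\<mu> \<ge> 0" using jk kj by (auto simp: \<mu>_def field_simps)
    then have "(1 - \<mu>) *\<^sub>R a + \<mu> *\<^sub>R b \<in> E"
      by (intro convexD[OF cvE a b]) auto
    with eq nk show False by simp
  qed
  have bound: "real N * measure lebesgue D \<le> (2*R + real N * norm v + 2) * measure lebesgue Q" for N :: nat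
  proof -
    have disj: "disjoint_family_on Dj {..<N}"
      unfolding disjoint_family_on_def
    proof (intro ballI impI)
      fix j k assume "j \<in> {..<N}" "k \<in> {..<N}" "j \<noteq> k"
      then show "Dj j \<inter> Dj k = {}"
        using aux by (metis disjoint_iff linorder_neqE_nat)
    qed
    have Djlm: "Dj j \<in> lmeasurable" for j unfolding Dj_def by (intro lmeas_transl Dlm)
    have "measure lebesgue (\<Union> (Dj ` {..<N})) = (\<Sum>j<N. measure lebesgue (Dj j))"
      using Djlm by (intro measure_finite_Union disj) (auto intro: fmeasurableD simp: fmeasurable_def simp del: emeasure_completion, metis less_irrefl)
    also have "\<dots> = real N * measure lebesgue D" by (simp add: Dj_def measure_transl)
    finally have eqU: "measure lebesgue (\<Union> (Dj ` {..<N})) = real N * measure lebesgue D" .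
    define K where "K = nat \<lceil>2*R + real N * norm v\<rceil>"
    define B where "B = (\<Union>m\<in>{..K}. (\<lambda>x. x + (real m - R) *\<^sub>R u) ` Q)"
    have cB: "compact B" unfolding B_def by (intro compact_UN compact_transl cQ) auto
    have sub: "\<Union> (Dj ` {..<N}) \<subseteq> B"
    proof
      fix y assume "y \<in> \<Union> (Dj ` {..<N})"
      then obtain j where j: "j < N" "y \<in> Dj j" by auto
      define e where "e = y - real (Suc j) *\<^sub>R v"
      have e: "e \<in> E" using j memDj e_def by auto
      define p where "p = hyperplane_proj v e"
      define c where "c = e \<bullet> u"
      have "((e \<bullet> v) / (v \<bullet> v)) *\<^sub>R v = c *\<^sub>R u"
        using v by (simp add: c_def u_def power2_norm_eq_inner[symmetric] power2_eq_square field_simps)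
      then have ep: "e = p + c *\<^sub>R u" by (simp add: p_def hyperplane_proj_def)
      have "\<bar>c\<bar> \<le> norm e * norm u" unfolding c_def by (rule Cauchy_Schwarz_ineq2)
      then have cR: "\<bar>c\<bar> \<le> R" using R(2)[OF e] nu by simp
      define s where "s = c + real (Suc j) * norm v"
      have y: "y = p + s *\<^sub>R u"
      proof -
        have "y = e + real (Suc j) *\<^sub>R v" by (simp add: e_def)
        also have "\<dots> = p + c *\<^sub>R u + (real (Suc j) * norm v) *\<^sub>R u"
          by (subst vu) (simp add: ep)
        finally show ?thesis by (simp add: s_def algebra_simps)
      qed
      define t where "t = s + R"
      have "0 \<le> real (Suc j) * norm v" by simp
      then have t0: "0 \<le> t" using cR unfolding t_def s_def by linarith
      have "real (Suc j) \<le> real N" using j by simp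
      then have "real (Suc j) * norm v \<le> real N * norm v" by (intro mult_right_mono) auto
      then have tK: "t \<le> 2*R + real N * norm v" using cR by (simp add: t_def s_def)
      define m where "m = nat \<lfloor>t\<rfloor>"
      define r where "r = t - real m"
      have rm: "real m = of_int \<lfloor>t\<rfloor>" using t0 by (simp add: m_def)
      have r01: "0 \<le> r" "r \<le> 1" using rm by (auto simp: r_def) linarith+
      have mK: "m \<le> K" unfolding m_def K_def using tK
        by (intro nat_mono) (meson floor_mono floor_le_ceiling order_trans)
      have pQ: "p + r *\<^sub>R u \<in> Q" unfolding Q_def p_def using e r01 by auto
      have "y = (p + r *\<^sub>R u) + (real m - R) *\<^sub>R u"
        by (simp add: y r_def t_def algebra_simps)
      then show "y \<in> B" unfolding B_def using mK pQ by blast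
    qed
    have "measure lebesgue (\<Union> (Dj ` {..<N})) \<le> measure lebesgue B"
      using sub lmeasurable_compact[OF cB] Djlm
      by (intro measure_mono_fmeasurable) (auto intro!: sets.finite_UN fmeasurableD)
    also have "\<dots> \<le> (\<Sum>m\<le>K. measure lebesgue ((\<lambda>x. x + (real m - R) *\<^sub>R u) ` Q))"
      unfolding B_def using lmeasurable_compact[OF cQ]
      by (intro measure_UNION_le) (auto intro!: fmeasurableD lmeas_transl)
    also have "\<dots> = real (Suc K) * measure lebesgue Q" by (simp add: measure_transl)
    also have "\<dots> \<le> (2*R + real N * norm v + 2) * measure lebesgue Q"
    proof (intro mult_right_mono mQ0)
      have "real K \<le> 2*R + real N * norm v + 1" unfolding K_def
        using R(1) by (simp add: of_nat_nat)
      then show "real (Suc K) \<le> 2*R + real N * norm v + 2" by simp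
    qed
    finally show ?thesis using eqU by simp
  qed
  show ?thesis
  proof (rule ccontr)
    assume "\<not> ?thesis"
    then have "measure lebesgue D > norm v * measure lebesgue Q" by (simp add: hm D_def)
    define \<delta> where "\<delta> = measure lebesgue D - norm v * measure lebesgue Q"
    have d0: "\<delta> > 0" using \<open>measure lebesgue D > _\<close> by (simp add: \<delta>_def)
    obtain N :: nat where N: "real N > (2*R + 2) * measure lebesgue Q / \<delta>"
      using reals_Archimedean2 by blast
    have "real N * \<delta> > (2*R + 2) * measure lebesgue Q" using N d0 by (simp add: field_simps)
    moreover have "real N * \<delta> \<le> (2*R + 2) * measure lebesgue Q"
      using bound[of N] by (simp add: \<delta>_def algebra_simps)
    ultimately show False by simp
  qed
qed

lemma Delta_ge:
  fixes E :: "'a::euclidean_space set"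
  assumes cE: "compact E" and q: "q \<noteq> 0"
  shows "hyperplane_measure q (hyperplane_proj q ` E) \<le> Delta E"
proof -
  obtain R where R: "R \<ge> 0" "\<And>x. x \<in> E \<Longrightarrow> norm x \<le> R"
    using compact_imp_bounded[OF cE] unfolding bounded_pos by (meson less_imp_le)
  have bd: "hyperplane_measure p (hyperplane_proj p ` E) \<le> measure lebesgue (cball (0::'a) (R+1))"
    if p: "p \<noteq> 0" for p
  proof -
    let ?P = "{x + s *\<^sub>R (p /\<^sub>R norm p) | x s. x \<in> hyperplane_proj p ` E \<and> s \<in> {0..1::real}}"
    have cP: "compact ?P" by (intro compact_prism compact_continuous_image continuous_hproj cE)
    have "?P \<subseteq> cball 0 (R+1)"
    proof
      fix y assume "y \<in> ?P"
      then obtain x s where y: "y = hyperplane_proj p x + s *\<^sub>R (p /\<^sub>R norm p)" "x \<in> E" "s \<in> {0..1}"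
        by auto
      have "norm y \<le> norm (hyperplane_proj p x) + norm (s *\<^sub>R (p /\<^sub>R norm p))"
        unfolding y by (rule norm_triangle_ineq)
      also have "norm (s *\<^sub>R (p /\<^sub>R norm p)) = s" using y(3) p by simp
      finally have "norm y \<le> norm (hyperplane_proj p x) + s" .
      also have "\<dots> \<le> R + 1" using norm_hproj[of p x] R(2)[OF y(2)] y(3) by auto
      finally show "y \<in> cball 0 (R+1)" by simp
    qed
    then show ?thesis unfolding hyperplane_measure_def
      using lmeasurable_compact[OF cP]
      by (intro measure_mono_fmeasurable) (auto intro: fmeasurableD)
  qed
  have "bdd_above ((\<lambda>q. hyperplane_measure q (hyperplane_proj q ` E)) ` (UNIV - {0}))"
    using bd by (intro bdd_aboveI[of _ "measure lebesgue (cball (0::'a) (R+1))"]) auto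
  then show ?thesis unfolding Delta_def using q by (intro cSUP_upper) auto
qed

lemma Delta_nonneg:
  fixes E :: "'a::euclidean_space set"
  assumes cE: "compact E"
  shows "0 \<le> Delta E"
proof -
  obtain b :: 'a where "b \<in> Basis" using nonempty_Basis by blast
  then have "b \<noteq> 0" by auto
  have "0 \<le> hyperplane_measure b (hyperplane_proj b ` E)" by (simp add: hyperplane_measure_def)
  also have "\<dots> \<le> Delta E" by (rule Delta_ge[OF cE \<open>b \<noteq> 0\<close>])
  finally show ?thesis .
qed

lemma key2:
  fixes E :: "'a::euclidean_space set" and w :: 'a
  assumes cE: "compact E" and cvE: "convex E"
  shows "measure lebesgue ((\<lambda>x. x + w) ` E - E) \<le> norm w * Delta E"
proof (cases "w = 0")
  case True then show ?thesis by simp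
next
  case False
  show ?thesis using key[OF cE cvE False] Delta_ge[OF cE False]
    by (meson mult_left_mono norm_ge_zero order_trans)
qed

theorem lemma4p5:
  fixes E :: "'a::euclidean_space set" and \<alpha> :: "real \<Rightarrow> 'a" and L :: real and F :: "real set"
  assumes "compact E" and "convex E"
    and "0 \<le> L" and "rectifiable_curve \<alpha> 0 L"
    and "finite F" and "F \<subseteq> {0..L}"
  shows "measure lebesgue (\<Union>t\<in>F. (\<lambda>x. x + \<alpha> t) ` E)
           \<le> measure lebesgue E + curve_length \<alpha> 0 L * Delta E"
proof -
  note cE = assms(1) and cvE = assms(2)
  have D0: "0 \<le> Delta E" by (rule Delta_nonneg[OF cE])
  have Ulm: "(\<Union>t\<in>A. (\<lambda>x. x + \<alpha> t) ` E) \<in> lmeasurable" if "finite A" for A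
    using that by (intro lmeasurable_compact compact_UN compact_transl cE) auto
  have Elm: "E \<in> sets lebesgue" using lmeasurable_compact[OF cE] by (simp add: fmeasurableD)
  let ?P = "\<lambda>A. A \<subseteq> {0..L} \<longrightarrow> (\<exists>n t. t 0 = 0 \<and> t n = Max (insert 0 A) \<and> (\<forall>i<n. t i \<le> t (Suc i)) \<and>
      measure lebesgue (\<Union>s\<in>A. (\<lambda>x. x + \<alpha> s) ` E)
        \<le> measure lebesgue E + (\<Sum>i<n. dist (\<alpha> (t (Suc i))) (\<alpha> (t i))) * Delta E)"
  have "?P F"
    using assms(5)
  proof (induction F rule: finite_linorder_max_induct)
    case empty
    show ?case by (intro impI exI[of _ 0] exI[of _ "\<lambda>_. 0"]) simp
  next
    case (insert b A)
    show ?case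
    proof
      assume sub: "insert b A \<subseteq> {0..L}"
      then obtain n t where t: "t 0 = 0" "t n = Max (insert 0 A)" "\<forall>i<n. t i \<le> t (Suc i)"
        and mt: "measure lebesgue (\<Union>s\<in>A. (\<lambda>x. x + \<alpha> s) ` E)
        \<le> measure lebesgue E + (\<Sum>i<n. dist (\<alpha> (t (Suc i))) (\<alpha> (t i))) * Delta E"
        using insert by auto
      have b0: "0 \<le> b" using sub by auto
      define t' where "t' = t(Suc n := b)"
      have Mx: "Max (insert 0 (insert b A)) = b"
        using insert(1,2) b0 by (intro Max_eqI) auto
      have tnb: "t n \<le> b" unfolding t(2) using insert(1,2) b0 by (subst Max_le_iff) auto
      have mono': "\<forall>i<Suc n. t' i \<le> t' (Suc i)"
        using t(3) tnb by (auto simp: t'_def less_Suc_eq)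
      have sum': "(\<Sum>i<Suc n. dist (\<alpha> (t' (Suc i))) (\<alpha> (t' i)))
          = (\<Sum>i<n. dist (\<alpha> (t (Suc i))) (\<alpha> (t i))) + dist (\<alpha> b) (\<alpha> (t n))"
        by (simp add: t'_def)
      define S where "S = (\<Sum>i<n. dist (\<alpha> (t (Suc i))) (\<alpha> (t i)))"
      have S0: "0 \<le> S" unfolding S_def by (intro sum_nonneg) auto
      have "measure lebesgue (\<Union>s\<in>insert b A. (\<lambda>x. x + \<alpha> s) ` E)
          \<le> measure lebesgue E + (S + dist (\<alpha> b) (\<alpha> (t n))) * Delta E"
      proof (cases "A = {}")
        case True
        have "measure lebesgue (\<Union>s\<in>insert b A. (\<lambda>x. x + \<alpha> s) ` E) = measure lebesgue E"
          using True by (simp add: measure_transl)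
        moreover have "0 \<le> (S + dist (\<alpha> b) (\<alpha> (t n))) * Delta E" using S0 D0 by simp
        ultimately show ?thesis by linarith
      next
        case False
        define m where "m = t n"
        have mA: "m \<in> A"
        proof -
          have "Max (insert 0 A) = Max A"
            using False insert(1) sub by (intro Max_eqI) (auto, meson Max_ge atLeastAtMost_iff order_trans subsetD)
          then show ?thesis using Max_in[OF insert(1) False] by (simp add: m_def t(2))
        qed
        define U where "U = (\<Union>s\<in>A. (\<lambda>x. x + \<alpha> s) ` E)"
        define D where "D = (\<lambda>x. x + \<alpha> b) ` E - (\<lambda>x. x + \<alpha> m) ` E"
        have "(\<lambda>x. x + \<alpha> m) ` E \<subseteq> U" using mA by (auto simp: U_def)
        then have subU: "(\<Union>s\<in>insert b A. (\<lambda>x. x + \<alpha> s) ` E) \<subseteq> D \<union> U"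
          by (auto simp: U_def D_def)
        have Ulm': "U \<in> lmeasurable" unfolding U_def by (rule Ulm[OF insert(1)])
        have Dlm': "D \<in> lmeasurable" unfolding D_def
          by (intro fmeasurable_Diff fmeasurableD lmeasurable_compact compact_transl cE)
        then have Dlm: "D \<in> sets lebesgue" by (rule fmeasurableD)
        have Deq: "D = (\<lambda>x. x + \<alpha> m) ` ((\<lambda>x. x + (\<alpha> b - \<alpha> m)) ` E - E)"
          unfolding D_def by (auto simp: mem_transl image_iff algebra_simps) 
        have "measure lebesgue D = measure lebesgue ((\<lambda>x. x + (\<alpha> b - \<alpha> m)) ` E - E)"
          unfolding Deq by (rule measure_transl)
        also have "\<dots> \<le> norm (\<alpha> b - \<alpha> m) * Delta E" by (rule key2[OF cE cvE])
        finally have mD: "measure lebesgue D \<le> dist (\<alpha> b) (\<alpha> (t n)) * Delta E"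
          by (simp add: dist_norm m_def)
        have "measure lebesgue (\<Union>s\<in>insert b A. (\<lambda>x. x + \<alpha> s) ` E) \<le> measure lebesgue (D \<union> U)"
          using subU Ulm[OF finite.insertI[OF insert(1)]] Dlm' Ulm'
          by (intro measure_mono_fmeasurable fmeasurable.Un fmeasurableD)
        also have "\<dots> \<le> measure lebesgue D + measure lebesgue U"
          using Dlm Ulm' by (intro measure_Un_le) (auto intro: fmeasurableD)
        finally show ?thesis using mD mt unfolding U_def S_def by (simp add: algebra_simps)
      qed
      then show "\<exists>n t. t 0 = 0 \<and> t n = Max (insert 0 (insert b A)) \<and> (\<forall>i<n. t i \<le> t (Suc i)) \<and>
      measure lebesgue (\<Union>s\<in>insert b A. (\<lambda>x. x + \<alpha> s) ` E)
        \<le> measure lebesgue E + (\<Sum>i<n. dist (\<alpha> (t (Suc i))) (\<alpha> (t i))) * Delta E"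
        using mono' sum' Mx t(1)
        by (intro exI[of _ "Suc n"] exI[of _ t']) (auto simp: t'_def S_def)
    qed
  qed
  then obtain n t where t: "t 0 = 0" "t n = Max (insert 0 F)" "\<forall>i<n. t i \<le> t (Suc i)"
    and mt: "measure lebesgue (\<Union>s\<in>F. (\<lambda>x. x + \<alpha> s) ` E)
        \<le> measure lebesgue E + (\<Sum>i<n. dist (\<alpha> (t (Suc i))) (\<alpha> (t i))) * Delta E"
    using assms(6) by auto
  define t' where "t' = t(Suc n := L)"
  have tnL: "t n \<le> L" unfolding t(2) using assms(3,5,6) by (subst Max_le_iff) auto
  have mono': "\<forall>i<Suc n. t' i \<le> t' (Suc i)"
    using t(3) tnL by (auto simp: t'_def less_Suc_eq)
  have sum': "(\<Sum>i<Suc n. dist (\<alpha> (t' (Suc i))) (\<alpha> (t' i)))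
      = (\<Sum>i<n. dist (\<alpha> (t (Suc i))) (\<alpha> (t i))) + dist (\<alpha> L) (\<alpha> (t n))"
    by (simp add: t'_def)
  have inP: "(\<Sum>i<Suc n. dist (\<alpha> (t' (Suc i))) (\<alpha> (t' i))) \<in> polygon_lengths \<alpha> 0 L"
    unfolding polygon_lengths_def using mono' t(1)
    by (intro CollectI exI[of _ "Suc n"] exI[of _ t']) (simp add: t'_def)
  have bdd: "bdd_above (polygon_lengths \<alpha> 0 L)" using assms(4) by (simp add: rectifiable_curve_def)
  have "(\<Sum>i<n. dist (\<alpha> (t (Suc i))) (\<alpha> (t i))) \<le> curve_length \<alpha> 0 L"
    using cSup_upper[OF inP bdd] unfolding sum' curve_length_def
    using zero_le_dist[of "\<alpha> L" "\<alpha> (t n)"] by linarith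
  then have "(\<Sum>i<n. dist (\<alpha> (t (Suc i))) (\<alpha> (t i))) * Delta E \<le> curve_length \<alpha> 0 L * Delta E"
    using D0 by (rule mult_right_mono)
  then show ?thesis using mt by simp
qed

end
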